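(* Let $n\ge k\ge 1$ be integers, $i\in\{1,\ldots,n\}$, and let $H\sim\text{Hyp}(n,i,k)$ be such that $\mathbb{E}(H)\le 1$. Then $\mathbb{P}(H=1) \ge \mathbb{P}(H\ge 2)$.
   Context: $\text{Hyp}(n,i,k)$ denotes the hypergeometric distribution: the number of black marbles in a sample without replacement of size $k$ from an urn with $i$ black and $n-i$ white marbles, i.e. $\mathbb{P}(H=j)=\binom{i}{j}\binom{n-i}{k-j}/\binom{n}{k}$. One has $\mathbb{E}(H)=ik/n$. *)

theory Defs
  imports Complex_Main
begin

text \<open>Hypergeometric distribution Hyp(n,i,k): number of black marbles in a sample of
size k drawn without replacement from an urn with i black and n-i white marbles.\<close>

definition hyp_pmf :: "nat \<Rightarrow> nat \<Rightarrow> nat \<Rightarrow> nat \<Rightarrow> real" where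
  "hyp_pmf n i k j = real (i choose j) * real ((n - i) choose (k - j)) / real (n choose k)"

text \<open>P(H = j) is zero for j > k; P(H >= 2) is the sum over j = 2..k.\<close>
definition hyp_prob_ge :: "nat \<Rightarrow> nat \<Rightarrow> nat \<Rightarrow> nat \<Rightarrow> real" where
  "hyp_prob_ge n i k m = (\<Sum>j\<in>{m..k}. hyp_pmf n i k j)"

definition hyp_mean :: "nat \<Rightarrow> nat \<Rightarrow> nat \<Rightarrow> real" where
  "hyp_mean n i k = (\<Sum>j\<in>{0..k}. real j * hyp_pmf n i k j)"

end

theory Submission
  imports Defs
begin

lemma choose_step: "(a - r) * (a choose r) = Suc r * (a choose Suc r)"
  by (metis binomial_absorb_comp binomial_absorption)

lemma mean_nat:
  assumes "1 \<le> k" "1 \<le> i" "i \<le> n"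
  shows "(\<Sum>j\<in>{0..k}. j * ((i choose j) * ((n - i) choose (k - j)))) = i * ((n - 1) choose (k - 1))"
proof -
  have "(\<Sum>j\<in>{0..k}. j * ((i choose j) * ((n - i) choose (k - j))))
      = (\<Sum>j\<in>{1..k}. j * ((i choose j) * ((n - i) choose (k - j))))"
    by (rule sum.mono_neutral_right) auto
  also have "\<dots> = (\<Sum>l<k. Suc l * ((i choose Suc l) * ((n - i) choose (k - Suc l))))"
    using sum_bounds_lt_plus1[of "\<lambda>j. j * ((i choose j) * ((n - i) choose (k - j)))" k] by simp
  also have "\<dots> = (\<Sum>l\<le>k-1. i * (((i - 1) choose l) * ((n - i) choose ((k - 1) - l))))"
  proof -
    have "{..<k} = {..k-1}" using assms by auto
    moreover have "Suc l * ((i choose Suc l) * ((n - i) choose (k - Suc l)))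
       = i * (((i - 1) choose l) * ((n - i) choose ((k - 1) - l)))" for l
      using binomial_absorption[of l i] by (simp add: mult.assoc[symmetric])
    ultimately show ?thesis by simp
  qed
  also have "\<dots> = i * (\<Sum>l\<le>k-1. ((i - 1) choose l) * ((n - i) choose ((k - 1) - l)))"
    by (simp add: sum_distrib_left)
  also have "\<dots> = i * ((i - 1 + (n - i)) choose (k - 1))" using vandermonde[of "i-1" "n-i" "k-1"] by simp
  also have "i - 1 + (n - i) = n - 1" using assms by simp
  finally show ?thesis .
qed

lemma ik_le_n:
  assumes "1 \<le> k" "k \<le> n" "1 \<le> i" "i \<le> n" "hyp_mean n i k \<le> 1"
  shows "i * k \<le> n"
proof -
  have pos: "real (n choose k) > 0" using assms by simp
  have "hyp_mean n i k = real (\<Sum>j\<in>{0..k}. j * ((i choose j) * ((n - i) choose (k - j)))) / real (n choose k)"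
    unfolding hyp_mean_def hyp_pmf_def by (simp add: sum_divide_distrib mult.assoc)
  also have "\<dots> = real (i * ((n - 1) choose (k - 1))) / real (n choose k)"
    using mean_nat assms by simp
  finally have "real (i * ((n - 1) choose (k - 1))) \<le> real (n choose k)"
    using assms(5) pos by (simp add: divide_le_eq)
  hence "real k * real (i * ((n - 1) choose (k - 1))) \<le> real k * real (n choose k)"
    by (intro mult_left_mono) auto
  hence "real (k * (i * ((n - 1) choose (k - 1)))) \<le> real (k * (n choose k))"
    by (simp only: of_nat_mult)
  hence "k * (i * ((n - 1) choose (k - 1))) \<le> k * (n choose k)" by linarith
  hence "(i * k) * ((n - 1) choose (k - 1)) \<le> n * ((n - 1) choose (k - 1))"
    using times_binomial_minus1_eq[of k n] assms by (simp only: ac_simps)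
  moreover have "((n - 1) choose (k - 1)) > 0" using assms by simp
  ultimately show ?thesis by simp
qed

lemma ratio:
  assumes "1 \<le> k" "k \<le> n" "1 \<le> i" "i \<le> n" "i * k \<le> n" "1 \<le> j" "Suc j \<le> k"
  shows "2 * hyp_pmf n i k (Suc j) \<le> hyp_pmf n i k j"
proof -
  define m where "m = n - i"
  define A where "A = i choose j"
  define B where "B = m choose (k - Suc j)"
  have e1: "(i - j) * A = Suc j * (i choose Suc j)" unfolding A_def by (rule choose_step)
  have e2: "(m - (k - Suc j)) * B = Suc (k - Suc j) * (m choose Suc (k - Suc j))"
    unfolding B_def by (rule choose_step)
  have sk: "Suc (k - Suc j) = k - j" using assms by simp
  have key: "(i - j) * (k - j) \<le> m - (k - Suc j)"
  proof -
    obtain a b where ab: "i = Suc a" "k = Suc b" using assms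
      by (metis Suc_le_D One_nat_def)
    have "a * b + a + b + 1 \<le> n" using assms(5) ab by (simp add: algebra_simps)
    hence "a * b \<le> m - (k - Suc j)" unfolding m_def using ab by simp
    moreover have "(i - j) * (k - j) \<le> a * b" using ab assms(6) by (simp add: mult_le_mono)
    ultimately show ?thesis by linarith
  qed
  have key2: "2 * ((i - j) * (k - j)) \<le> Suc j * (m - (k - Suc j))"
    using key assms(6) by (intro mult_le_mono) auto
  have "Suc j * (k - j) * (2 * ((i choose Suc j) * B)) = (2 * (k - j) * B) * (Suc j * (i choose Suc j))"
    by (simp only: ac_simps)
  also have "\<dots> = (2 * (k - j) * B) * ((i - j) * A)" using e1 by simp
  also have "\<dots> = 2 * ((i - j) * (k - j)) * (A * B)" by (simp only: ac_simps)
  also have "\<dots> \<le> Suc j * (m - (k - Suc j)) * (A * B)"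
    using key2 by (rule mult_right_mono) simp
  also have "\<dots> = (Suc j * A) * ((m - (k - Suc j)) * B)"
    by (simp only: ac_simps)
  also have "\<dots> = (Suc j * A) * ((k - j) * (m choose (k - j)))" using e2 sk by simp
  also have "\<dots> = Suc j * (k - j) * (A * (m choose (k - j)))"
    by (simp only: ac_simps)
  finally have "2 * ((i choose Suc j) * B) \<le> A * (m choose (k - j))"
    using assms by simp
  hence "real (2 * ((i choose Suc j) * B)) \<le> real (A * (m choose (k - j)))"
    by (simp only: of_nat_le_iff)
  thus ?thesis unfolding hyp_pmf_def A_def B_def m_def
    by (simp add: divide_right_mono)
qed

lemma partial:
  assumes "1 \<le> k" "k \<le> n" "1 \<le> i" "i \<le> n" "i * k \<le> n" "1 \<le> t" "t \<le> k"
  shows "(\<Sum>j\<in>{2..t}. hyp_pmf n i k j) + hyp_pmf n i k t \<le> hyp_pmf n i k 1"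
  using assms(6,7)
proof (induction t rule: dec_induct)
  case base
  then show ?case by simp
next
  case (step t)
  have "2 * hyp_pmf n i k (Suc t) \<le> hyp_pmf n i k t"
    using ratio[OF assms(1-5)] step by simp
  moreover have "{2..Suc t} = insert (Suc t) {2..t}" using step by auto
  ultimately show ?case using step by simp
qed

theorem lemma2:
  fixes n i k :: nat
  assumes "1 \<le> k" and "k \<le> n" and "1 \<le> i" and "i \<le> n"
    and "hyp_mean n i k \<le> 1"
  shows "hyp_pmf n i k 1 \<ge> hyp_prob_ge n i k 2"
proof -
  have ik: "i * k \<le> n" using ik_le_n assms by blast
  have "hyp_pmf n i k k \<ge> 0" unfolding hyp_pmf_def by simp
  thus ?thesis using partial[OF assms(1-4) ik assms(1) order.refl] unfolding hyp_prob_ge_def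
    by simp
qed

end
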